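(* Let $\mathbb{I}\subseteq\mathbb{Z}$ be a discrete interval and $A$ a band operator on $\ell^2(\mathbb{I})$ with band-width $w$. Then for every $N\in\mathbb{N}$, \[ \nu_N(A)=\inf\{\nu_{j..j+N-1}(A):j..j+N-1\subseteq\mathbb{I}\}=\inf\{\nu(C):C\in\mathcal{C}_N(A)\}. \]
   Context: $a..b:=\{n\in\mathbb{Z}:a\le n\le b\}$; a discrete interval is a set of consecutive integers (finite or infinite). A band operator with band-width $w$ has matrix entries $A_{ij}=0$ for $|i-j|>w$. $\nu(T):=\inf\{\|Tx\|:\|x\|=1\}$ (for a matrix $C$, as an operator between finite-dimensional $\ell^2$ spaces); $\nu_N(A):=\inf\{\|Ax\|:\|x\|=1,\operatorname{diam}(\operatorname{supp}x)<N\}$; $\nu_{J}(A):=\inf\{\|Ax\|:\operatorname{supp}x\subseteq J,\|x\|=1\}$. $\mathcal{C}_N(A)$ is the set of $(N+2w)\times N$ matrices $C=(C_{ij})_{i\in1-w..N+w,\,j\in1..N}$ with $C_{ij}=A_{k+i,k+j}$ for some $k$ with $k+1..k+N\subseteq\mathbb{I}$, where $C_{ij}:=0$ if $A_{k+i,k+j}$ is undefined. *)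

theory Defs
  imports "HOL-Analysis.Analysis"
begin

definition discrete_interval :: "int set \<Rightarrow> bool" where
  "discrete_interval I \<longleftrightarrow> (\<forall>a\<in>I. \<forall>c\<in>I. \<forall>b. a \<le> b \<and> b \<le> c \<longrightarrow> b \<in> I)"

text \<open>Matrix of an operator on l2(I), given by its entries a i j for i, j in I.
  Band operator with band-width w: bounded entries and a i j = 0 for |i-j| > w
  (for band matrices, boundedness of the operator is equivalent to boundedness of the entries).\<close>
definition band_operator :: "int set \<Rightarrow> (int \<Rightarrow> int \<Rightarrow> complex) \<Rightarrow> nat \<Rightarrow> bool" where
  "band_operator I a w \<longleftrightarrow>
     (\<exists>M. \<forall>i\<in>I. \<forall>j\<in>I. cmod (a i j) \<le> M) \<and>
     (\<forall>i\<in>I. \<forall>j\<in>I. \<bar>i - j\<bar> > int w \<longrightarrow> a i j = 0)"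

definition supp :: "(int \<Rightarrow> complex) \<Rightarrow> int set" where
  "supp x = {i. x i \<noteq> 0}"

text \<open>l2 norm of a finitely supported vector (only applied to such vectors).\<close>
definition l2norm :: "(int \<Rightarrow> complex) \<Rightarrow> real" where
  "l2norm x = sqrt (\<Sum>i\<in>supp x. (cmod (x i))\<^sup>2)"

definition op_apply :: "int set \<Rightarrow> (int \<Rightarrow> int \<Rightarrow> complex) \<Rightarrow> (int \<Rightarrow> complex) \<Rightarrow> (int \<Rightarrow> complex)" where
  "op_apply I a x = (\<lambda>i. if i \<in> I then (\<Sum>j\<in>supp x \<inter> I. a i j * x j) else 0)"

definition nu_N :: "int set \<Rightarrow> (int \<Rightarrow> int \<Rightarrow> complex) \<Rightarrow> nat \<Rightarrow> real" where
  "nu_N I a N = Inf {l2norm (op_apply I a x) | x.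
      supp x \<subseteq> I \<and> l2norm x = 1 \<and> (\<forall>i\<in>supp x. \<forall>j\<in>supp x. \<bar>i - j\<bar> < int N)}"

definition nu_J :: "int set \<Rightarrow> (int \<Rightarrow> int \<Rightarrow> complex) \<Rightarrow> int set \<Rightarrow> real" where
  "nu_J I a J = Inf {l2norm (op_apply I a x) | x. supp x \<subseteq> J \<and> l2norm x = 1}"

definition cut_matrix :: "int set \<Rightarrow> (int \<Rightarrow> int \<Rightarrow> complex) \<Rightarrow> nat \<Rightarrow> nat \<Rightarrow> int \<Rightarrow> (int \<Rightarrow> int \<Rightarrow> complex)" where
  "cut_matrix I a w N k = (\<lambda>i j.
     if i \<in> {1 - int w .. int N + int w} \<and> j \<in> {1 .. int N} \<and> k + i \<in> I \<and> k + j \<in> I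
     then a (k + i) (k + j) else 0)"

definition C_N :: "int set \<Rightarrow> (int \<Rightarrow> int \<Rightarrow> complex) \<Rightarrow> nat \<Rightarrow> nat \<Rightarrow> (int \<Rightarrow> int \<Rightarrow> complex) set" where
  "C_N I a w N = {cut_matrix I a w N k | k. {k + 1 .. k + int N} \<subseteq> I}"

definition nu_mat :: "nat \<Rightarrow> nat \<Rightarrow> (int \<Rightarrow> int \<Rightarrow> complex) \<Rightarrow> real" where
  "nu_mat w N C = Inf {sqrt (\<Sum>i\<in>{1 - int w .. int N + int w}. (cmod (\<Sum>j\<in>{1 .. int N}. C i j * y j))\<^sup>2) | y.
      (\<Sum>j\<in>{1 .. int N}. (cmod (y j))\<^sup>2) = 1}"

end

theory Submission
  imports Defs
begin


lemma Inf_UN_real: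
  fixes S :: "'a \<Rightarrow> real set"
  assumes "A \<noteq> {}" "\<And>j. j \<in> A \<Longrightarrow> S j \<noteq> {}" "\<And>j z. j \<in> A \<Longrightarrow> z \<in> S j \<Longrightarrow> z \<ge> 0"
  shows "Inf (\<Union>j\<in>A. S j) = Inf ((\<lambda>j. Inf (S j)) ` A)"
proof -
  have "(INF z \<in> (\<Union>x\<in>A. S x). id z) = (INF x\<in>A. INF z\<in>S x. id z)"
    using assms by (intro cINF_UNION) (auto intro!: bdd_belowI[where m=0])
  then show ?thesis by simp
qed

lemma l2norm_eq:
  assumes "finite S" "supp z \<subseteq> S"
  shows "l2norm z = sqrt (\<Sum>i\<in>S. (cmod (z i))\<^sup>2)"
  unfolding l2norm_def
  by (rule arg_cong[where f=sqrt], rule sum.mono_neutral_left) (use assms in \<open>auto simp: supp_def\<close>)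

lemma sum_shift_int:
  fixes f :: "int \<Rightarrow> 'b::comm_monoid_add"
  shows "(\<Sum>i\<in>{k+p..k+q}. f i) = (\<Sum>j\<in>{p..q}. f (k+j))"
  by (rule sum.reindex_bij_witness[where i="\<lambda>i. k+i" and j="\<lambda>i. i-k"]) auto

lemma l2norm_pos_supp:
  assumes "l2norm x = 1" shows "finite (supp x)" "supp x \<noteq> {}"
  using assms unfolding l2norm_def by (auto intro: ccontr)

lemma op_apply_window:
  assumes "supp x \<subseteq> {k+1..k+int N}" "{k+1..k+int N} \<subseteq> I"
  shows "op_apply I a x i = (if i \<in> I then (\<Sum>j\<in>{k+1..k+int N}. a i j * x j) else 0)"
  unfolding op_apply_def
  by (auto intro!: sum.mono_neutral_left simp: supp_def) (use assms in \<open>auto simp: supp_def\<close>)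

lemma window_values:
  assumes band: "band_operator I a w" and W: "{k+1..k+int N} \<subseteq> I"
  shows "{l2norm (op_apply I a x) | x. supp x \<subseteq> {k+1..k+int N} \<and> l2norm x = 1}
       = {sqrt (\<Sum>i\<in>{1 - int w .. int N + int w}. (cmod (\<Sum>j\<in>{1 .. int N}. cut_matrix I a w N k i j * y j))\<^sup>2) | y.
      (\<Sum>j\<in>{1 .. int N}. (cmod (y j))\<^sup>2) = 1}" (is "?L = ?R")
proof -
  define W where "W = {k+1..k+int N}"
  have key: "l2norm (op_apply I a x) = sqrt (\<Sum>i\<in>{1 - int w .. int N + int w}. (cmod (\<Sum>j\<in>{1 .. int N}. cut_matrix I a w N k i j * x (k+j)))\<^sup>2)"
    if sx: "supp x \<subseteq> W" for x
  proof -
    have ap: "op_apply I a x i = (if i \<in> I then (\<Sum>j\<in>W. a i j * x j) else 0)" for i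
      using op_apply_window[OF sx[unfolded W_def] W] W_def by simp
    have "supp (op_apply I a x) \<subseteq> {k + (1 - int w) .. k + (int N + int w)}"
    proof
      fix i assume i: "i \<in> supp (op_apply I a x)"
      then have iI: "i \<in> I" and ne: "(\<Sum>j\<in>W. a i j * x j) \<noteq> 0"
        by (auto simp: supp_def ap split: if_splits)
      from ne obtain j where j: "j \<in> W" "a i j \<noteq> 0" by (metis (no_types, lifting) mult_eq_0_iff sum.neutral)
      with band iI W have "\<bar>i - j\<bar> \<le> int w" unfolding band_operator_def W_def
        by (meson in_mono not_le)
      with j(1) show "i \<in> {k + (1 - int w) .. k + (int N + int w)}" by (auto simp: W_def)
    qed
    then have "l2norm (op_apply I a x) = sqrt (\<Sum>i\<in>{k + (1 - int w) .. k + (int N + int w)}. (cmod (op_apply I a x i))\<^sup>2)"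
      by (intro l2norm_eq) auto
    also have "\<dots> = sqrt (\<Sum>i\<in>{1 - int w .. int N + int w}. (cmod (op_apply I a x (k+i)))\<^sup>2)"
      by (simp only: sum_shift_int)
    also have "\<dots> = sqrt (\<Sum>i\<in>{1 - int w .. int N + int w}. (cmod (\<Sum>j\<in>{1 .. int N}. cut_matrix I a w N k i j * x (k+j)))\<^sup>2)"
    proof -
      have "op_apply I a x (k+i) = (\<Sum>j\<in>{1 .. int N}. cut_matrix I a w N k i j * x (k+j))"
        if "i \<in> {1 - int w .. int N + int w}" for i
      proof -
        have "op_apply I a x (k+i) = (if k+i \<in> I then (\<Sum>j\<in>{k+1..k+int N}. a (k+i) j * x j) else 0)"
          using ap W_def by simp
        also have "\<dots> = (if k+i \<in> I then (\<Sum>j\<in>{1..int N}. a (k+i) (k+j) * x (k+j)) else 0)"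
          by (simp only: sum_shift_int)
        also have "\<dots> = (\<Sum>j\<in>{1 .. int N}. cut_matrix I a w N k i j * x (k+j))"
        proof -
          have "k+j \<in> I" if "j \<in> {1..int N}" for j using W that by auto
          then show ?thesis using that unfolding cut_matrix_def by (auto intro!: sum.cong)
        qed
        finally show ?thesis .
      qed
      then show ?thesis by simp
    qed
    finally show ?thesis .
  qed
  show ?thesis
  proof
    show "?L \<subseteq> ?R"
    proof
      fix v assume "v \<in> ?L"
      then obtain x where x: "supp x \<subseteq> W" "l2norm x = 1" "v = l2norm (op_apply I a x)"
        unfolding W_def by blast
      have "1 = sqrt (\<Sum>i\<in>W. (cmod (x i))\<^sup>2)" using l2norm_eq[of W x] x W_def by simp
      then have "(\<Sum>i\<in>W. (cmod (x i))\<^sup>2) = 1" by (metis real_sqrt_eq_1_iff)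
      then have "(\<Sum>j\<in>{1..int N}. (cmod (x (k+j)))\<^sup>2) = 1"
        unfolding W_def by (simp only: sum_shift_int)
      then show "v \<in> ?R" using key[OF x(1)] x(3)
        by (intro CollectI exI[where x="\<lambda>j. x (k+j)"]) simp
    qed
  next
    show "?R \<subseteq> ?L"
    proof
      fix v assume "v \<in> ?R"
      then obtain y where y: "(\<Sum>j\<in>{1 .. int N}. (cmod (y j))\<^sup>2) = 1"
        "v = sqrt (\<Sum>i\<in>{1 - int w .. int N + int w}. (cmod (\<Sum>j\<in>{1 .. int N}. cut_matrix I a w N k i j * y j))\<^sup>2)"
        by blast
      define x where "x = (\<lambda>i. if i \<in> W then y (i - k) else 0)"
      have sx: "supp x \<subseteq> W" by (auto simp: x_def supp_def)
      have "l2norm x = sqrt (\<Sum>i\<in>W. (cmod (x i))\<^sup>2)" using l2norm_eq[of W x] sx W_def by simp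
      also have "(\<Sum>i\<in>W. (cmod (x i))\<^sup>2) = (\<Sum>j\<in>{1..int N}. (cmod (x (k+j)))\<^sup>2)"
        unfolding W_def by (simp only: sum_shift_int)
      also have "\<dots> = 1" using y(1) by (auto simp: x_def W_def intro!: sum.cong)
      finally have n1: "l2norm x = 1" by simp
      have "v = l2norm (op_apply I a x)" using key[OF sx] y(2)
        by (auto simp: x_def W_def intro!: sum.cong arg_cong[where f=sqrt])
      then show "v \<in> ?L" using sx n1 W_def by blast
    qed
  qed
qed



lemma cover_window:
  fixes N :: nat
  assumes I: "discrete_interval I" and j0: "{j0 .. j0 + int N - 1} \<subseteq> I"
    and F: "finite F" "F \<noteq> {}" "F \<subseteq> I" and d: "\<forall>i\<in>F. \<forall>j\<in>F. \<bar>i - j\<bar> < int N"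
  shows "\<exists>j. {j .. j + int N - 1} \<subseteq> I \<and> F \<subseteq> {j .. j + int N - 1}"
proof -
  define m where "m = Min F"
  define M where "M = Max F"
  have mF: "m \<in> F" and MF: "M \<in> F" unfolding m_def M_def using Min_in[OF F(1,2)] Max_in[OF F(1,2)] by auto
  have bnd: "m \<le> i \<and> i \<le> M" if "i \<in> F" for i unfolding m_def M_def using Min_le[OF F(1) that] Max_ge[OF F(1) that] by simp
  have dm: "M - m < int N" proof -
    have "\<bar>M - m\<bar> < int N" using d mF MF by blast
    then show ?thesis by simp
  qed
  have N1: "N \<ge> 1" using dm bnd[OF mF] bnd[OF MF] by linarith
  have sub: "{p..q} \<subseteq> I" if "p \<in> I" "q \<in> I" for p q
  proof
    fix b assume "b \<in> {p..q}"
    then have "p \<le> b" "b \<le> q" by auto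
    then show "b \<in> I" using I that unfolding discrete_interval_def by blast
  qed
  have j0I: "j0 \<in> I" "j0 + int N - 1 \<in> I" using j0 N1 by auto
  have mI: "m \<in> I" and MI: "M \<in> I" using F(3) mF MF by auto
  show ?thesis
  proof (cases "m \<le> j0")
    case True
    have "m + int N - 1 \<in> {m .. j0 + int N - 1}" using True N1 by simp
    then have "m + int N - 1 \<in> I" using sub[OF mI j0I(2)] by blast
    then have "{m .. m + int N - 1} \<subseteq> I" using sub mI by blast
    moreover have "F \<subseteq> {m .. m + int N - 1}"
    proof
      fix i assume "i \<in> F" then have "m \<le> i \<and> i \<le> M" by (rule bnd)
      then show "i \<in> {m .. m + int N - 1}" using dm by simp
    qed
    ultimately show ?thesis by blast
  next
    case False
    show ?thesis
    proof (cases "M \<ge> j0 + int N - 1")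
      case True
      have "M - int N + 1 \<in> {j0 .. M}" using True N1 by simp
      then have "M - int N + 1 \<in> I" using sub[OF j0I(1) MI] by blast
      then have "{M - int N + 1 .. M - int N + 1 + int N - 1} \<subseteq> I" using sub[OF _ MI] by simp
      moreover have "F \<subseteq> {M - int N + 1 .. M - int N + 1 + int N - 1}"
      proof
        fix i assume "i \<in> F" then have "m \<le> i \<and> i \<le> M" by (rule bnd)
        then show "i \<in> {M - int N + 1 .. M - int N + 1 + int N - 1}" using dm by simp
      qed
      ultimately show ?thesis by blast
    next
      case False2: False
      have "F \<subseteq> {j0 .. j0 + int N - 1}"
      proof
        fix i assume "i \<in> F" then have "m \<le> i \<and> i \<le> M" by (rule bnd)
        then show "i \<in> {j0 .. j0 + int N - 1}" using False False2 by simp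
      qed
      then show ?thesis using j0 by blast
    qed
  qed
qed



theorem lemma4p1:
  fixes I :: "int set" and a :: "int \<Rightarrow> int \<Rightarrow> complex" and w N :: nat
  assumes "discrete_interval I"
    and "band_operator I a w"
    and "N \<ge> 1"
    and "\<exists>j. {j .. j + int N - 1} \<subseteq> I"
  shows "nu_N I a N = Inf {nu_J I a {j .. j + int N - 1} | j. {j .. j + int N - 1} \<subseteq> I}
       \<and> Inf {nu_J I a {j .. j + int N - 1} | j. {j .. j + int N - 1} \<subseteq> I}
           = Inf {nu_mat w N C | C. C \<in> C_N I a w N}"
proof
  define S where "S j = {l2norm (op_apply I a x) | x. supp x \<subseteq> {j .. j + int N - 1} \<and> l2norm x = 1}" for j
  define JS where "JS = {j. {j .. j + int N - 1} \<subseteq> I}"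
  have nuJ: "nu_J I a {j .. j + int N - 1} = Inf (S j)" for j unfolding nu_J_def S_def by simp
  have setJ: "{nu_J I a {j .. j + int N - 1} | j. {j .. j + int N - 1} \<subseteq> I} = (\<lambda>j. Inf (S j)) ` JS"
    unfolding JS_def nuJ by auto
  obtain j0 where j0: "{j0 .. j0 + int N - 1} \<subseteq> I" using assms(4) by blast
  have T: "{l2norm (op_apply I a x) | x.
      supp x \<subseteq> I \<and> l2norm x = 1 \<and> (\<forall>i\<in>supp x. \<forall>j\<in>supp x. \<bar>i - j\<bar> < int N)} = (\<Union>j\<in>JS. S j)"
    (is "?T = _")
  proof
    show "?T \<subseteq> (\<Union>j\<in>JS. S j)"
    proof
      fix v assume "v \<in> ?T"
      then obtain x where x: "supp x \<subseteq> I" "l2norm x = 1" "\<forall>i\<in>supp x. \<forall>j\<in>supp x. \<bar>i - j\<bar> < int N"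
        "v = l2norm (op_apply I a x)" by blast
      obtain j where j: "{j .. j + int N - 1} \<subseteq> I" "supp x \<subseteq> {j .. j + int N - 1}"
        using cover_window[OF assms(1) j0 l2norm_pos_supp[OF x(2)] x(1) x(3)] by blast
      then show "v \<in> (\<Union>j\<in>JS. S j)" using x unfolding JS_def S_def by blast
    qed
  next
    show "(\<Union>j\<in>JS. S j) \<subseteq> ?T"
    proof
      fix v assume "v \<in> (\<Union>j\<in>JS. S j)"
      then obtain j x where x: "{j .. j + int N - 1} \<subseteq> I" "supp x \<subseteq> {j .. j + int N - 1}" "l2norm x = 1"
        "v = l2norm (op_apply I a x)" unfolding JS_def S_def by blast
      have "\<forall>i\<in>supp x. \<forall>j'\<in>supp x. \<bar>i - j'\<bar> < int N"
      proof (intro ballI)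
        fix i j' assume "i \<in> supp x" "j' \<in> supp x"
        then have "i \<in> {j .. j + int N - 1}" "j' \<in> {j .. j + int N - 1}" using x(2) by auto
        then show "\<bar>i - j'\<bar> < int N" by auto
      qed
      moreover have "supp x \<subseteq> I" using x(1,2) by blast
      ultimately show "v \<in> ?T" using x by blast
    qed
  qed
  have JSne: "JS \<noteq> {}" using j0 JS_def by blast
  have Sne: "S j \<noteq> {}" for j
  proof -
    define x where "x = (\<lambda>i. if i = j then (1::complex) else 0)"
    have sx: "supp x = {j}" by (auto simp: x_def supp_def)
    have "l2norm x = 1" unfolding l2norm_def sx by (simp add: x_def)
    moreover have "supp x \<subseteq> {j .. j + int N - 1}" using sx assms(3) by auto
    ultimately show ?thesis unfolding S_def by blast
  qed
  have Spos: "z \<ge> 0" if "z \<in> S j" for j z using that unfolding S_def l2norm_def by (auto intro!: sum_nonneg)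
  show "nu_N I a N = Inf {nu_J I a {j .. j + int N - 1} | j. {j .. j + int N - 1} \<subseteq> I}"
    unfolding nu_N_def T setJ using Inf_UN_real[of JS S] JSne Sne Spos by blast
  have eq: "nu_J I a {j .. j + int N - 1} = nu_mat w N (cut_matrix I a w N (j - 1))"
    if "{j .. j + int N - 1} \<subseteq> I" for j
  proof -
    have W: "{(j-1)+1 .. (j-1) + int N} = {j .. j + int N - 1}" by auto
    show ?thesis
      using window_values[OF assms(2), of "j-1" N] that
      unfolding nu_J_def nu_mat_def W by simp
  qed
  have "{nu_J I a {j .. j + int N - 1} | j. {j .. j + int N - 1} \<subseteq> I} = {nu_mat w N C | C. C \<in> C_N I a w N}"
  proof (intro equalityI subsetI)
    fix v assume "v \<in> {nu_J I a {j .. j + int N - 1} | j. {j .. j + int N - 1} \<subseteq> I}"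
    then obtain j where j: "{j .. j + int N - 1} \<subseteq> I" "v = nu_J I a {j .. j + int N - 1}" by blast
    have W: "{(j-1)+1 .. (j-1) + int N} = {j .. j + int N - 1}" by auto
    have "cut_matrix I a w N (j-1) \<in> C_N I a w N" unfolding C_N_def using j(1) W by (intro CollectI exI[where x="j-1"]) (simp add: algebra_simps)
    then show "v \<in> {nu_mat w N C | C. C \<in> C_N I a w N}" using eq[OF j(1)] j(2) by blast
  next
    fix v assume "v \<in> {nu_mat w N C | C. C \<in> C_N I a w N}"
    then obtain k where k: "{k + 1 .. k + int N} \<subseteq> I" "v = nu_mat w N (cut_matrix I a w N k)"
      unfolding C_N_def by blast
    have W: "{(k+1) .. (k+1) + int N - 1} = {k + 1 .. k + int N}" by auto
    show "v \<in> {nu_J I a {j .. j + int N - 1} | j. {j .. j + int N - 1} \<subseteq> I}"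
      using eq[of "k+1"] k W by (intro CollectI exI[where x="k+1"]) simp
  qed
  then show "Inf {nu_J I a {j .. j + int N - 1} | j. {j .. j + int N - 1} \<subseteq> I}
           = Inf {nu_mat w N C | C. C \<in> C_N I a w N}" by simp
qed

end
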